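(* Let $d\ge 2$, $S=\{1,\dots,d\}$, $\Delta_d=\{\mathbf x\in\mathbb R_+^d:\sum_{i\in S}x_i=1\}$ with the norm $\|\mathbf x\|=\max_{i}|x_i|$, and fix a delay $r>0$. For a population size $N\in\mathbb N$ put $\delta=1/N$ and assume $m:=rN$ is a positive integer; let $\mathbb M=\{-m,\dots,0\}$. Consider the stochastic process $\mathbf X^{(N)}$ and the delay differential equation $\dot{\mathbf x}(t)=\mathbf F(\mathbf x_t)$ described in the context, and assume the initial history satisfies $\|\boldsymbol\xi_k-\boldsymbol\xi_{k+1}\|\le 2\delta$ for all $k\in\{-m,\dots,-1\}$. Let $\boldsymbol\phi\in C([-r,0],\Delta_d)$ satisfy $\boldsymbol\phi(k\delta)=\boldsymbol\xi_k$ for all $k\in\mathbb M$, and for $T>0$ let $$D(T,\boldsymbol\phi)=\max_{t\in[0,T]}\big\|\mathbf Y^{(N)}(t)-\mathbf x(t,\boldsymbol\phi)\big\|,$$ where $\mathbf Y^{(N)}$ is the interpolated process and $\mathbf x(t,\boldsymbol\phi)$ the solution of the delay equation with initial function $\boldsymbol\phi$. Then for any $\varepsilon>0$ and $T>0$ there is a constant $c>0$ (not depending on $N$) such that for all sufficiently large $N$, $$\Pr\Big[D(T,\boldsymbol\phi)\ge\varepsilon\ \Big|\ \mathbf X^{(N)}(k\delta)=\boldsymbol\phi(k\delta),\ k\in\mathbb M\Big]\le 2d\exp(-\varepsilon^2 cN).$$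
   Context: Notation: $\mathbf e_i$ is the $i$-th unit vector; $\Delta_d^N=\Delta_d\cap\{0,1/N,\dots,1\}^d$; $C=C([-r,0],\Delta_d)$ with $\|\boldsymbol\phi\|_C=\sup_{-r\le\theta\le0}\|\boldsymbol\phi(\theta)\|$. Transition times $\mathbb T=\{0,\delta,2\delta,\dots\}$, extended times $\mathbb T_e=\{-m\delta,\dots,-\delta\}\cup\mathbb T$. Stochastic process: $\mathbf X^{(N)}(\tau)\in\Delta_d^N$ for $\tau\in\mathbb T_e$ (population shares of the $d$ strategies), with given initial history $\mathbf X^{(N)}(k\delta)=\boldsymbol\xi_k\in\Delta_d^N$, $k\in\mathbb M$. For $\tau\in\mathbb T$ let $\mathbf X^{(N)}_\tau=(\mathbf X^{(N)}(\tau+k\delta))_{k\in\mathbb M}$. There are functions $p^m_{ij}$ ($i\neq j$) of such $(m+1)$-tuples with values in $[0,1]$, with $p^m_{ij}=0$ whenever $X^{(N)}_j(\tau)=0$, such that conditionally on the past up to time $\tau$, $\mathbf X^{(N)}(\tau+\delta)=\mathbf X^{(N)}(\tau)+\delta(\mathbf e_i-\mathbf e_j)$ with probability $p^m_{ij}(\mathbf X^{(N)}_\tau)$ for each $i\ne j$, and otherwise $\mathbf X^{(N)}(\tau+\delta)=\mathbf X^{(N)}(\tau)$. Step path: for $t\ge0$, $\overline{\mathbf X}^{(N)}_t(\theta)=\mathbf X^{(N)}(\sigma)$ whenever $t+\theta\in[\sigma,\sigma+\delta)$, $\sigma\in\mathbb T_e$, $\theta\in[-r,0]$. There are functionals $p_{ij}$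 on functions $[-r,0]\to\Delta_d$ (including $C$ and such step functions) with values in $[0,1]$, $p_{ij}(\boldsymbol\phi)=0$ if $\phi_j(0)=0$, and $p^m_{ij}(\mathbf X^{(N)}_\tau)=p_{ij}(\overline{\mathbf X}^{(N)}_t)$ for $t\in[\tau,\tau+\delta)$. Mean-field equation: $F_i(\boldsymbol\phi)=\sum_{k\ne i}p_{ik}(\boldsymbol\phi)-\sum_{k\ne i}p_{ki}(\boldsymbol\phi)$, and $\mathbf F=(F_1,\dots,F_d)$ is assumed Lipschitz: there is $K>0$ with $\|\mathbf F(\boldsymbol\phi)-\mathbf F(\boldsymbol\psi)\|\le K\sup_\theta\|\boldsymbol\phi(\theta)-\boldsymbol\psi(\theta)\|$. The delay equation is $\dot{\mathbf x}(t)=\mathbf F(\mathbf x_t)$ for $t\ge0$, $\mathbf x_t(\theta)=\mathbf x(t+\theta)$, $\mathbf x_0=\boldsymbol\phi\in C$; its solution $\mathbf x(t,\boldsymbol\phi)$ exists uniquely for all $t\ge0$ and stays in $\Delta_d$. Interpolated process: $\mathbf Y^{(N)}(t)=\mathbf X^{(N)}(\tau)+\frac{t-\tau}{\delta}(\mathbf X^{(N)}(\tau+\delta)-\mathbf X^{(N)}(\tau))$ for $t\in[\tau,\tau+\delta)$, $\tau\in\mathbb T_e$. *)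

theory Defs
  imports "HOL-Probability.Probability"
begin

text \<open>Strategies are the elements of a finite type 'd, so d = CARD('d).
  Population states are vectors in real^'d.\<close>

definition Dsimplex :: "(real^'d::finite) set" where
  "Dsimplex = {x. (\<forall>i. 0 \<le> x$i) \<and> (\<Sum>i\<in>UNIV. x$i) = 1}"

definition grid_simplex :: "nat \<Rightarrow> (real^'d::finite) set" where
  "grid_simplex N = {x \<in> Dsimplex. \<forall>i. \<exists>k::nat. x$i = real k / real N}"

definition maxnorm :: "real^'d::finite \<Rightarrow> real" where
  "maxnorm x = Max (range (\<lambda>i. \<bar>x$i\<bar>))"

definition Fmf :: "('d::finite \<Rightarrow> 'd \<Rightarrow> (real \<Rightarrow> real^'d) \<Rightarrow> real) \<Rightarrow> (real \<Rightarrow> real^'d) \<Rightarrow> real^'d" where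
  "Fmf p \<phi> = (\<chi> i. (\<Sum>k\<in>UNIV - {i}. p i k \<phi>) - (\<Sum>k\<in>UNIV - {i}. p k i \<phi>))"

text \<open>Step path: given the discrete path h (h k = X(k delta)), the function
  theta \<mapsto> X(sigma) where t + theta \<in> [sigma, sigma + delta).\<close>
definition steppath :: "nat \<Rightarrow> (int \<Rightarrow> real^'d::finite) \<Rightarrow> real \<Rightarrow> (real \<Rightarrow> real^'d)" where
  "steppath N h t = (\<lambda>\<theta>. h \<lfloor>real N * (t + \<theta>)\<rfloor>)"

text \<open>One-step transition law: Some (i,j) means the move delta (e_i - e_j)
  (probability p i j), None means no change.\<close>
definition trans_pmf :: "('d::finite \<Rightarrow> 'd \<Rightarrow> (real \<Rightarrow> real^'d) \<Rightarrow> real) \<Rightarrow> (real \<Rightarrow> real^'d) \<Rightarrow> ('d \<times> 'd) option pmf" where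
  "trans_pmf p \<phi> = embed_pmf (\<lambda>mv. (case mv of
       None \<Rightarrow> 1 - (\<Sum>ij\<in>{ij. fst ij \<noteq> snd ij}. p (fst ij) (snd ij) \<phi>)
     | Some (i, j) \<Rightarrow> (if i \<noteq> j then p i j \<phi> else 0)))"

definition upd :: "nat \<Rightarrow> real^'d::finite \<Rightarrow> ('d \<times> 'd) option \<Rightarrow> real^'d" where
  "upd N x mv = (case mv of None \<Rightarrow> x
     | Some (i, j) \<Rightarrow> x + (1 / real N) *\<^sub>R (axis i 1 - axis j 1))"

text \<open>Law of the discrete path after n transitions, started from the
  (deterministic) history h0; h k is X(k delta).\<close>
fun path_pmf :: "nat \<Rightarrow> ('d::finite \<Rightarrow> 'd \<Rightarrow> (real \<Rightarrow> real^'d) \<Rightarrow> real) \<Rightarrow> (int \<Rightarrow> real^'d) \<Rightarrow> nat \<Rightarrow> (int \<Rightarrow> real^'d) pmf" where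
  "path_pmf N p h0 0 = return_pmf h0"
| "path_pmf N p h0 (Suc n) = bind_pmf (path_pmf N p h0 n)
     (\<lambda>h. map_pmf (\<lambda>mv. h(int n + 1 := upd N (h (int n)) mv))
                   (trans_pmf p (steppath N h (real n / real N))))"

definition interp :: "nat \<Rightarrow> (int \<Rightarrow> real^'d::finite) \<Rightarrow> real \<Rightarrow> real^'d" where
  "interp N h t = (let k = \<lfloor>real N * t\<rfloor> in
     h k + (real N * t - real_of_int k) *\<^sub>R (h (k + 1) - h k))"

definition Dev :: "nat \<Rightarrow> (int \<Rightarrow> real^'d::finite) \<Rightarrow> (real \<Rightarrow> real^'d) \<Rightarrow> real \<Rightarrow> real" where
  "Dev N h x T = (SUP t\<in>{0..T}. maxnorm (interp N h t - x t))"

end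

theory Submission
  imports Defs
begin


lemma maxnorm_ge: "\<bar>x$i\<bar> \<le> maxnorm (x::real^'d::finite)"
  unfolding maxnorm_def by (rule Max_ge) auto

lemma maxnorm_le: "(\<And>i. \<bar>x$i\<bar> \<le> c) \<Longrightarrow> maxnorm (x::real^'d::finite) \<le> c"
  unfolding maxnorm_def by (subst Max_le_iff) auto

lemma maxnorm_nonneg: "0 \<le> maxnorm (x::real^'d::finite)"
  using maxnorm_ge[of x] abs_ge_zero order_trans by blast

lemma maxnorm_triangle: "maxnorm (x + y) \<le> maxnorm x + maxnorm (y::real^'d::finite)"
  apply (rule maxnorm_le)
  using maxnorm_ge[of x] maxnorm_ge[of y] by (smt (verit) vector_add_component)

lemma maxnorm_le_norm: "maxnorm (x::real^'d::finite) \<le> norm x"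
  by (rule maxnorm_le) (rule component_le_norm_cart)

lemma maxnorm_minus: "maxnorm (x - y) = maxnorm (y - (x::real^'d::finite))"
  apply (rule antisym; rule maxnorm_le)
  using maxnorm_ge by (metis abs_minus_commute vector_minus_component)+

lemma maxnorm_scale: "maxnorm (c *\<^sub>R x) = \<bar>c\<bar> * maxnorm (x::real^'d::finite)"
proof (rule antisym)
  show "maxnorm (c *\<^sub>R x) \<le> \<bar>c\<bar> * maxnorm x"
    by (rule maxnorm_le) (simp add: abs_mult maxnorm_ge mult_left_mono)
next
  show "\<bar>c\<bar> * maxnorm x \<le> maxnorm (c *\<^sub>R x)"
  proof (cases "c = 0")
    case True then show ?thesis by (simp add: maxnorm_nonneg)
  next
    case False
    have "maxnorm x \<le> maxnorm (c *\<^sub>R x) / \<bar>c\<bar>"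
      apply (rule maxnorm_le)
      using maxnorm_ge[of "c *\<^sub>R x"] False by (simp add: abs_mult field_simps)
    then show ?thesis using False by (simp add: field_simps)
  qed
qed

lemma grid_simplex_simplex: "x \<in> grid_simplex N \<Longrightarrow> x \<in> Dsimplex"
  by (simp add: grid_simplex_def)

lemma sum_axis: "(\<Sum>l\<in>UNIV. axis i (1::real) $ l) = 1"
  by (simp add: axis_def)

lemma grid_move:
  assumes x: "x \<in> grid_simplex N" and N: "N > 0" and ij: "i \<noteq> j" and xj: "x $ j \<noteq> 0"
  shows "x + (1 / real N) *\<^sub>R (axis i 1 - axis j 1) \<in> grid_simplex N"
proof -
  let ?y = "x + (1 / real N) *\<^sub>R (axis i 1 - axis j 1)"
  have xs: "\<forall>l. 0 \<le> x$l" "(\<Sum>l\<in>UNIV. x$l) = 1" and xg: "\<forall>l. \<exists>k::nat. x$l = real k / real N"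
    using x by (auto simp: grid_simplex_def Dsimplex_def)
  have comp: "?y $ l = x $ l + (if l = i then 1 / real N else 0) - (if l = j then 1 / real N else 0)" for l
    by (simp add: axis_def)
  have g: "\<exists>k::nat. ?y$l = real k / real N \<and> 0 \<le> ?y $ l" for l
  proof -
    obtain k where k: "x$l = real k / real N" using xg by blast
    show ?thesis
    proof (cases "l = i")
      case True
      then show ?thesis using ij k N by (intro exI[of _ "Suc k"]) (auto simp: comp axis_def add_divide_distrib)
    next
      case False
      show ?thesis
      proof (cases "l = j")
        case True
        then have "k \<noteq> 0" using xj k by auto
        then have k1: "real k \<ge> 1" by simp
        have "?y$l = real (k - 1) / real N"
          using True False k N k1 by (simp add: comp axis_def of_nat_diff diff_divide_distrib)
        moreover have "0 \<le> real (k - 1) / real N" by simp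
        ultimately show ?thesis by metis
      next
        case False2: False
        then show ?thesis using False k N by (auto simp: comp axis_def)
      qed
    qed
  qed
  have "(\<Sum>l\<in>UNIV. ?y$l) = (\<Sum>l\<in>UNIV. x$l) + (1 / real N) * ((\<Sum>l\<in>UNIV. axis i 1 $ l) - (\<Sum>l\<in>UNIV. axis j (1::real) $ l))"
    by (simp add: sum.distrib sum_subtractf sum_distrib_left algebra_simps)
  also have "\<dots> = 1" using xs by (simp add: sum_axis)
  finally show ?thesis using g by (auto simp: grid_simplex_def Dsimplex_def)
qed

lemma sum_pairs_if: "(\<Sum>ij\<in>UNIV. (if fst ij \<noteq> snd ij then f (fst ij) (snd ij) else 0)) =
   (\<Sum>ij\<in>{ij::'a::finite \<times> 'a. fst ij \<noteq> snd ij}. f (fst ij) (snd ij)::real)"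
  by (simp add: sum.inter_filter[symmetric])

lemma sum_option: "(\<Sum>mv\<in>(UNIV::'a::finite option set). g mv) = g None + (\<Sum>a\<in>UNIV. g (Some a))"
proof -
  have "(UNIV::'a option set) = insert None (range Some)" by (rule UNIV_option_conv)
  then have "sum g UNIV = sum g (insert None (range Some))" by simp
  also have "\<dots> = g None + sum g (range Some)" by (subst sum.insert) auto
  also have "sum g (range Some) = (\<Sum>a\<in>UNIV. g (Some a))" by (simp add: sum.reindex)
  finally show ?thesis .
qed

locale mf =
  fixes p :: "'d::finite \<Rightarrow> 'd \<Rightarrow> (real \<Rightarrow> real^'d) \<Rightarrow> real"
    and r K :: real
    and \<phi> x :: "real \<Rightarrow> real^'d"
  assumes r_pos: "r > 0"
    and p_local: "\<And>i j \<psi> \<eta>. (\<forall>\<theta>\<in>{-r..0}. \<psi> \<theta> = \<eta> \<theta>) \<Longrightarrow> p i j \<psi> = p i j \<eta>"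
    and p_range: "\<And>i j \<psi>. i \<noteq> j \<Longrightarrow> (\<forall>\<theta>\<in>{-r..0}. \<psi> \<theta> \<in> Dsimplex) \<Longrightarrow>
                     0 \<le> p i j \<psi> \<and> p i j \<psi> \<le> 1"
    and p_sum: "\<And>\<psi>. (\<forall>\<theta>\<in>{-r..0}. \<psi> \<theta> \<in> Dsimplex) \<Longrightarrow>
                     (\<Sum>ij\<in>{ij. fst ij \<noteq> snd ij}. p (fst ij) (snd ij) \<psi>) \<le> 1"
    and p_zero: "\<And>i j \<psi>. i \<noteq> j \<Longrightarrow> (\<forall>\<theta>\<in>{-r..0}. \<psi> \<theta> \<in> Dsimplex) \<Longrightarrow>
                     \<psi> 0 $ j = 0 \<Longrightarrow> p i j \<psi> = 0"
    and K_pos: "K > 0"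
    and F_lip: "\<And>\<psi> \<eta>. (\<forall>\<theta>\<in>{-r..0}. \<psi> \<theta> \<in> Dsimplex) \<Longrightarrow> (\<forall>\<theta>\<in>{-r..0}. \<eta> \<theta> \<in> Dsimplex) \<Longrightarrow>
                     maxnorm (Fmf p \<psi> - Fmf p \<eta>) \<le> K * (SUP \<theta>\<in>{-r..0}. maxnorm (\<psi> \<theta> - \<eta> \<theta>))"
    and phi_cont: "continuous_on {-r..0} \<phi>"
    and phi_simplex: "\<And>\<theta>. \<theta> \<in> {-r..0} \<Longrightarrow> \<phi> \<theta> \<in> Dsimplex"
    and x_init: "\<And>\<theta>. \<theta> \<in> {-r..0} \<Longrightarrow> x \<theta> = \<phi> \<theta>"
    and x_ode: "\<And>t. t \<ge> 0 \<Longrightarrow>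
                  (x has_vector_derivative Fmf p (\<lambda>\<theta>. x (t + \<theta>))) (at t within {0..})"
    and x_simplex: "\<And>t. t \<ge> 0 \<Longrightarrow> x t \<in> Dsimplex"
begin

definition tf :: "(real \<Rightarrow> real^'d) \<Rightarrow> ('d \<times> 'd) option \<Rightarrow> real" where
  "tf \<psi> = (\<lambda>mv. (case mv of
       None \<Rightarrow> 1 - (\<Sum>ij\<in>{ij. fst ij \<noteq> snd ij}. p (fst ij) (snd ij) \<psi>)
     | Some (i, j) \<Rightarrow> (if i \<noteq> j then p i j \<psi> else 0)))"

lemma tf_nonneg: "\<forall>\<theta>\<in>{-r..0}. \<psi> \<theta> \<in> Dsimplex \<Longrightarrow> 0 \<le> tf \<psi> mv"
  using p_sum[of \<psi>] p_range[of _ _ \<psi>] by (auto simp: tf_def split: option.splits)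

lemma tf_sum: "(\<Sum>mv\<in>UNIV. tf \<psi> mv) = 1"
proof -
  have "(\<Sum>a\<in>UNIV. tf \<psi> (Some a)) = (\<Sum>ij\<in>UNIV. (if fst ij \<noteq> snd ij then p (fst ij) (snd ij) \<psi> else 0))"
    by (intro sum.cong) (auto simp: tf_def)
  then show ?thesis using sum_pairs_if[of "\<lambda>a b. p a b \<psi>"] by (simp add: sum_option) (simp add: tf_def)
qed

lemma pmf_trans: assumes "\<forall>\<theta>\<in>{-r..0}. \<psi> \<theta> \<in> Dsimplex"
  shows "pmf (trans_pmf p \<psi>) mv = tf \<psi> mv"
proof -
  have nn: "\<And>mv. 0 \<le> tf \<psi> mv" using tf_nonneg[OF assms] .
  have "(\<integral>\<^sup>+mv. ennreal (tf \<psi> mv) \<partial>count_space UNIV) = (\<Sum>mv\<in>UNIV. ennreal (tf \<psi> mv))"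
    by (simp add: nn_integral_count_space_finite)
  also have "\<dots> = ennreal (\<Sum>mv\<in>UNIV. tf \<psi> mv)" using nn by (simp add: sum_ennreal)
  also have "\<dots> = 1" by (simp add: tf_sum)
  finally have one: "(\<integral>\<^sup>+mv. ennreal (tf \<psi> mv) \<partial>count_space UNIV) = 1" .
  have "trans_pmf p \<psi> = embed_pmf (tf \<psi>)" unfolding trans_pmf_def tf_def ..
  then show ?thesis using pmf_embed_pmf[OF nn one] by simp
qed

lemma set_trans: assumes "\<forall>\<theta>\<in>{-r..0}. \<psi> \<theta> \<in> Dsimplex" and "Some (i, j) \<in> set_pmf (trans_pmf p \<psi>)"
  shows "i \<noteq> j" "p i j \<psi> \<noteq> 0"
  using assms by (auto simp: set_pmf_iff pmf_trans tf_def split: if_splits)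

lemma trans_mean: assumes "\<forall>\<theta>\<in>{-r..0}. \<psi> \<theta> \<in> Dsimplex"
  shows "measure_pmf.expectation (trans_pmf p \<psi>) (\<lambda>mv. (upd N y mv - y) $ i) = (1 / real N) * Fmf p \<psi> $ i"
proof -
  have "measure_pmf.expectation (trans_pmf p \<psi>) (\<lambda>mv. (upd N y mv - y) $ i)
      = (\<Sum>mv\<in>UNIV. (upd N y mv - y) $ i * tf \<psi> mv)"
    by (subst integral_measure_pmf_real[where A=UNIV]) (auto simp: pmf_trans[OF assms])
  also have "\<dots> = (\<Sum>ab\<in>UNIV. (upd N y (Some ab) - y) $ i * tf \<psi> (Some ab))"
    by (simp add: sum_option upd_def)
  also have "\<dots> = (\<Sum>a\<in>UNIV. \<Sum>b\<in>UNIV. (upd N y (Some (a,b)) - y) $ i * tf \<psi> (Some (a,b)))"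
    by (simp add: sum.cartesian_product UNIV_Times_UNIV[symmetric] del: UNIV_Times_UNIV)
  also have "\<dots> = (\<Sum>a\<in>UNIV. \<Sum>b\<in>UNIV. (1 / real N) * ((if a = i \<and> b \<noteq> i then p i b \<psi> else 0) - (if b = i \<and> a \<noteq> i then p a i \<psi> else 0)))"
    by (intro sum.cong refl) (auto simp: upd_def tf_def axis_def)
  also have "\<dots> = (1 / real N) * ((\<Sum>a\<in>UNIV. \<Sum>b\<in>UNIV. (if a = i \<and> b \<noteq> i then p i b \<psi> else 0)) - (\<Sum>a\<in>UNIV. \<Sum>b\<in>UNIV. (if b = i \<and> a \<noteq> i then p a i \<psi> else 0)))"
    by (simp only: sum_distrib_left right_diff_distrib sum_subtractf)
  also have "(\<Sum>a\<in>UNIV. \<Sum>b\<in>UNIV. (if a = i \<and> b \<noteq> i then p i b \<psi> else 0)) = (\<Sum>k\<in>UNIV - {i}. p i k \<psi>)"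
  proof -
    have "\<And>a. (\<Sum>b\<in>UNIV. (if a = i \<and> b \<noteq> i then p i b \<psi> else 0)) = (if a = i then (\<Sum>b\<in>UNIV. if b \<noteq> i then p i b \<psi> else 0) else 0)"
      by auto
    then have "(\<Sum>a\<in>UNIV. \<Sum>b\<in>UNIV. (if a = i \<and> b \<noteq> i then p i b \<psi> else 0)) = (\<Sum>b\<in>UNIV. if b \<noteq> i then p i b \<psi> else 0)"
      by simp
    also have "\<dots> = (\<Sum>k\<in>UNIV - {i}. p i k \<psi>)"
      by (simp add: sum.If_cases Int_def Diff_eq Compl_eq)
    finally show ?thesis .
  qed
  also have "(\<Sum>a\<in>UNIV. \<Sum>b\<in>UNIV. (if b = i \<and> a \<noteq> i then p a i \<psi> else 0)) = (\<Sum>k\<in>UNIV - {i}. p k i \<psi>)"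
  proof -
    have "\<And>a. (\<Sum>b\<in>UNIV. (if b = i \<and> a \<noteq> i then p a i \<psi> else 0)) = (if a \<noteq> i then p a i \<psi> else 0)"
      by (auto simp: sum.delta')
    then have "(\<Sum>a\<in>UNIV. \<Sum>b\<in>UNIV. (if b = i \<and> a \<noteq> i then p a i \<psi> else 0)) = (\<Sum>a\<in>UNIV. if a \<noteq> i then p a i \<psi> else 0)"
      by simp
    also have "\<dots> = (\<Sum>k\<in>UNIV - {i}. p k i \<psi>)"
      by (simp add: sum.If_cases Int_def Diff_eq Compl_eq)
    finally show ?thesis .
  qed
  finally show ?thesis by (simp add: Fmf_def)
qed

end



context mf begin

lemma steppath_idx: "N > 0 \<Longrightarrow> steppath N h (real n / real N) \<theta> = h (int n + \<lfloor>real N * \<theta>\<rfloor>)"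
proof -
  assume N: "N > 0"
  have "real N * (real n / real N + \<theta>) = real N * \<theta> + real_of_int (int n)" using N by (simp add: field_simps)
  then have "\<lfloor>real N * (real n / real N + \<theta>)\<rfloor> = \<lfloor>real N * \<theta>\<rfloor> + int n" by (metis floor_add_int)
  then show ?thesis by (simp add: steppath_def add.commute)
qed

lemma floor_range: assumes "N > 0" "r * real N = real m" "\<theta> \<in> {-r..0}"
  shows "-int m \<le> \<lfloor>real N * \<theta>\<rfloor>" "\<lfloor>real N * \<theta>\<rfloor> \<le> 0"
proof -
  have "real N * (-r) \<le> real N * \<theta>" using assms(3) by (intro mult_left_mono) auto
  then have "- real m \<le> real N * \<theta>" using assms(2) by (simp add: mult.commute)
  then show "-int m \<le> \<lfloor>real N * \<theta>\<rfloor>" by (simp add: le_floor_iff)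
  have "real N * \<theta> \<le> 0" using assms by (simp add: mult_nonneg_nonpos)
  then show "\<lfloor>real N * \<theta>\<rfloor> \<le> 0" by (simp add: floor_le_iff)
qed

lemma path_support:
  assumes N: "N > 0" and m: "r * real N = real m"
    and h0: "\<forall>k. -int m \<le> k \<and> k \<le> 0 \<longrightarrow> h0 k \<in> grid_simplex N"
  shows "h \<in> set_pmf (path_pmf N p h0 n) \<Longrightarrow>
    (\<forall>k. (k \<le> 0 \<or> k > int n) \<longrightarrow> h k = h0 k) \<and> (\<forall>k. -int m \<le> k \<and> k \<le> int n \<longrightarrow> h k \<in> grid_simplex N)"
proof (induction n arbitrary: h)
  case 0
  then show ?case using h0 by auto
next
  case (Suc n)
  let ?\<psi> = "\<lambda>g. steppath N g (real n / real N)"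
  from Suc.prems obtain g mv where g: "g \<in> set_pmf (path_pmf N p h0 n)"
    and mv: "mv \<in> set_pmf (trans_pmf p (?\<psi> g))" and h: "h = g(int n + 1 := upd N (g (int n)) mv)"
    by auto
  note IH = Suc.IH[OF g]
  have simp\<psi>: "\<forall>\<theta>\<in>{-r..0}. ?\<psi> g \<theta> \<in> Dsimplex"
  proof
    fix \<theta> :: real assume th: "\<theta> \<in> {-r..0}"
    have "?\<psi> g \<theta> = g (int n + \<lfloor>real N * \<theta>\<rfloor>)" by (rule steppath_idx[OF N])
    moreover have "g (int n + \<lfloor>real N * \<theta>\<rfloor>) \<in> grid_simplex N"
      using IH floor_range[OF N m th] by auto
    ultimately show "?\<psi> g \<theta> \<in> Dsimplex" by (simp add: grid_simplex_simplex)
  qed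
  have gn: "g (int n) \<in> grid_simplex N" using IH by auto
  have new: "upd N (g (int n)) mv \<in> grid_simplex N"
  proof (cases mv)
    case None then show ?thesis using gn by (simp add: upd_def)
  next
    case (Some ij)
    then obtain i j where ij: "mv = Some (i, j)" by (cases ij) auto
    have ne: "i \<noteq> j" and pn: "p i j (?\<psi> g) \<noteq> 0" using set_trans[OF simp\<psi>] mv ij by auto
    have "?\<psi> g 0 $ j \<noteq> 0" using p_zero[OF ne simp\<psi>] pn by auto
    then have "g (int n) $ j \<noteq> 0" using steppath_idx[OF N, of g n 0] by simp
    then show ?thesis using grid_move[OF gn N ne] ij by (simp add: upd_def)
  qed
  show ?case using IH new unfolding h by auto
qed

lemma nn_integral_path_later:
  assumes g: "\<And>h k v. int n < k \<Longrightarrow> g (h(k := v)) = g h" and nL: "n \<le> L"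
  shows "(\<integral>\<^sup>+h. g h \<partial>path_pmf N p h0 L) = (\<integral>\<^sup>+h. g h \<partial>path_pmf N p h0 n)"
  using nL
proof (induction L rule: dec_induct)
  case base then show ?case ..
next
  case (step L)
  have "(\<integral>\<^sup>+h. g h \<partial>path_pmf N p h0 (Suc L)) = (\<integral>\<^sup>+h. g h \<partial>path_pmf N p h0 L)"
    using step(1) g by (simp add: measure_pmf.emeasure_space_1)
  then show ?case using step(3) by simp
qed

lemma Fmf_local: assumes "(\<forall>\<theta>\<in>{-r..0}. \<psi> \<theta> = \<eta> \<theta>)" shows "Fmf p \<psi> = Fmf p \<eta>"
proof -
  have "\<And>i j. p i j \<psi> = p i j \<eta>" using p_local assms by blast
  then show ?thesis unfolding Fmf_def by simp
qed

definition Mart :: "nat \<Rightarrow> 'd \<Rightarrow> nat \<Rightarrow> (int \<Rightarrow> real^'d) \<Rightarrow> real" where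
  "Mart N i n h = h (int n) $ i - h 0 $ i - (1 / real N) * (\<Sum>k<n. Fmf p (steppath N h (real k / real N)) $ i)"

lemma steppath_upd_later:
  assumes N: "N > 0" and k: "int j < k"
  shows "Fmf p (steppath N (h(k := v)) (real j / real N)) = Fmf p (steppath N h (real j / real N))"
proof (rule Fmf_local, intro ballI)
  fix \<theta> :: real assume th: "\<theta> \<in> {-r..0}"
  have "real N * \<theta> \<le> 0" using th by (simp add: mult_nonneg_nonpos)
  then have "\<lfloor>real N * \<theta>\<rfloor> \<le> 0" by (simp add: floor_le_iff)
  then have "int j + \<lfloor>real N * \<theta>\<rfloor> \<noteq> k" using k by linarith
  then show "steppath N (h(k := v)) (real j / real N) \<theta> = steppath N h (real j / real N) \<theta>"
    by (simp add: steppath_idx[OF N])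
qed

lemma Mart_upd_later:
  assumes N: "N > 0" and k: "int n < k"
  shows "Mart N i n (h(k := v)) = Mart N i n h"
proof -
  have "(\<Sum>j<n. Fmf p (steppath N (h(k := v)) (real j / real N)) $ i) = (\<Sum>j<n. Fmf p (steppath N h (real j / real N)) $ i)"
    using steppath_upd_later[OF N] k by (intro sum.cong) auto
  then show ?thesis using k by (simp add: Mart_def)
qed

lemma Mart_Suc:
  assumes N: "N > 0"
  shows "Mart N i (Suc n) (h(int n + 1 := v)) = Mart N i n h + (v - h (int n)) $ i - (1 / real N) * Fmf p (steppath N h (real n / real N)) $ i"
proof -
  have "(\<Sum>j<Suc n. Fmf p (steppath N (h(int n + 1 := v)) (real j / real N)) $ i) = (\<Sum>j<Suc n. Fmf p (steppath N h (real j / real N)) $ i)"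
    using steppath_upd_later[OF N] by (intro sum.cong) auto
  then show ?thesis by (simp add: Mart_def algebra_simps)
qed

lemma steppath_simplex:
  assumes N: "N > 0" and m: "r * real N = real m"
    and h0: "\<forall>k. -int m \<le> k \<and> k \<le> 0 \<longrightarrow> h0 k \<in> grid_simplex N"
    and g: "g \<in> set_pmf (path_pmf N p h0 n)" and kn: "k \<le> n"
  shows "\<forall>\<theta>\<in>{-r..0}. steppath N g (real k / real N) \<theta> \<in> Dsimplex"
proof
  fix \<theta> :: real assume th: "\<theta> \<in> {-r..0}"
  note S = path_support[OF N m h0 g]
  have "steppath N g (real k / real N) \<theta> = g (int k + \<lfloor>real N * \<theta>\<rfloor>)" by (rule steppath_idx[OF N])
  moreover have "g (int k + \<lfloor>real N * \<theta>\<rfloor>) \<in> grid_simplex N"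
  proof -
    have "-int m \<le> int k + \<lfloor>real N * \<theta>\<rfloor>" "int k + \<lfloor>real N * \<theta>\<rfloor> \<le> int n"
      using floor_range[OF N m th] kn by linarith+
    then show ?thesis using S by blast
  qed
  ultimately show "steppath N g (real k / real N) \<theta> \<in> Dsimplex" by (simp add: grid_simplex_simplex)
qed

lemma delta_bound: "\<bar>(upd N y mv - y) $ i\<bar> \<le> 1 / real N"
  by (auto simp: upd_def axis_def split: option.splits)

lemma mgf:
  assumes N: "N > 0" and m: "r * real N = real m"
    and h0: "\<forall>k. -int m \<le> k \<and> k \<le> 0 \<longrightarrow> h0 k \<in> grid_simplex N"
    and l: "l > 0" and \<sigma>: "\<sigma> = 1 \<or> \<sigma> = -1"
  shows "(\<integral>\<^sup>+h. ennreal (exp (l * (\<sigma> * Mart N i n h))) \<partial>path_pmf N p h0 n)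
           \<le> ennreal (exp (real n * (l\<^sup>2 * (2 / real N)\<^sup>2 / 8)))"
proof (induction n)
  case 0
  then show ?case by (simp add: Mart_def)
next
  case (Suc n)
  define s where "s = l\<^sup>2 * (2 / real N)\<^sup>2 / 8"
  have step: "(\<integral>\<^sup>+mv. ennreal (exp (l * (\<sigma> * Mart N i (Suc n) (g(int n + 1 := upd N (g (int n)) mv)))))
                 \<partial>trans_pmf p (steppath N g (real n / real N)))
              \<le> ennreal (exp (l * (\<sigma> * Mart N i n g))) * ennreal (exp s)"
    if g: "g \<in> set_pmf (path_pmf N p h0 n)" for g
  proof -
    let ?\<psi> = "steppath N g (real n / real N)"
    let ?Q = "trans_pmf p ?\<psi>"
    define c where "c = (1 / real N) * Fmf p ?\<psi> $ i"
    define \<xi> where "\<xi> = (\<lambda>mv. \<sigma> * ((upd N (g (int n)) mv - g (int n)) $ i - c))"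
    have sp: "\<forall>\<theta>\<in>{-r..0}. ?\<psi> \<theta> \<in> Dsimplex" using steppath_simplex[OF N m h0 g] by simp
    have eq: "exp (l * (\<sigma> * Mart N i (Suc n) (g(int n + 1 := upd N (g (int n)) mv))))
             = exp (l * (\<sigma> * Mart N i n g)) * exp (l * \<xi> mv)" for mv
      unfolding Mart_Suc[OF N] \<xi>_def c_def by (simp add: algebra_simps flip: exp_add)
    have fin: "finite (set_pmf ?Q)" by simp
    have E0: "measure_pmf.expectation ?Q \<xi> = 0"
    proof -
      have "measure_pmf.expectation ?Q (\<lambda>mv. (upd N (g (int n)) mv - g (int n)) $ i - c)
          = measure_pmf.expectation ?Q (\<lambda>mv. (upd N (g (int n)) mv - g (int n)) $ i) - measure_pmf.expectation ?Q (\<lambda>mv. c)"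
        by (rule Bochner_Integration.integral_diff) (auto intro: integrable_measure_pmf_finite[OF fin])
      also have "\<dots> = 0" using trans_mean[OF sp] by (simp add: c_def)
      finally show ?thesis by (simp add: \<xi>_def)
    qed
    interpret H: interval_bounded_random_variable "measure_pmf ?Q" \<xi> "-1 / real N - \<sigma> * c" "1 / real N - \<sigma> * c"
    proof unfold_locales
      show "\<xi> \<in> borel_measurable (measure_pmf ?Q)" by simp
      show "AE x in measure_pmf ?Q. \<xi> x \<in> {-1 / real N - \<sigma> * c..1 / real N - \<sigma> * c}"
      proof (rule AE_I2)
        fix mv
        have "\<bar>(upd N (g (int n)) mv - g (int n)) $ i\<bar> \<le> 1 / real N" by (rule delta_bound)
        then show "\<xi> mv \<in> {-1 / real N - \<sigma> * c..1 / real N - \<sigma> * c}"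
          using \<sigma> by (auto simp: \<xi>_def algebra_simps)
      qed
    qed
    have "(1 / real N - \<sigma> * c) - (-1 / real N - \<sigma> * c) = 2 / real N" by (simp add: field_simps)
    then have hoeff: "(\<integral>\<^sup>+mv. ennreal (exp (l * \<xi> mv)) \<partial>?Q) \<le> ennreal (exp s)"
      using H.Hoeffdings_lemma_nn_integral_0[OF l E0] by (simp add: s_def)
    have "(\<integral>\<^sup>+mv. ennreal (exp (l * (\<sigma> * Mart N i (Suc n) (g(int n + 1 := upd N (g (int n)) mv))))) \<partial>?Q)
        = (\<integral>\<^sup>+mv. ennreal (exp (l * (\<sigma> * Mart N i n g))) * ennreal (exp (l * \<xi> mv)) \<partial>?Q)"
      by (simp add: eq ennreal_mult)
    also have "\<dots> = ennreal (exp (l * (\<sigma> * Mart N i n g))) * (\<integral>\<^sup>+mv. ennreal (exp (l * \<xi> mv)) \<partial>?Q)"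
      by (rule nn_integral_cmult) simp
    also have "\<dots> \<le> ennreal (exp (l * (\<sigma> * Mart N i n g))) * ennreal (exp s)"
      by (rule mult_left_mono[OF hoeff]) simp
    finally show ?thesis .
  qed
  have "(\<integral>\<^sup>+h. ennreal (exp (l * (\<sigma> * Mart N i (Suc n) h))) \<partial>path_pmf N p h0 (Suc n))
      = (\<integral>\<^sup>+g. (\<integral>\<^sup>+mv. ennreal (exp (l * (\<sigma> * Mart N i (Suc n) (g(int n + 1 := upd N (g (int n)) mv)))))
                 \<partial>trans_pmf p (steppath N g (real n / real N))) \<partial>path_pmf N p h0 n)"
    by simp
  also have "\<dots> \<le> (\<integral>\<^sup>+g. ennreal (exp (l * (\<sigma> * Mart N i n g))) * ennreal (exp s) \<partial>path_pmf N p h0 n)"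
    by (rule nn_integral_mono_AE) (use step in \<open>auto simp: AE_measure_pmf_iff\<close>)
  also have "\<dots> = (\<integral>\<^sup>+g. ennreal (exp (l * (\<sigma> * Mart N i n g))) \<partial>path_pmf N p h0 n) * ennreal (exp s)"
    by (rule nn_integral_multc) simp
  also have "\<dots> \<le> ennreal (exp (real n * s)) * ennreal (exp s)"
    by (rule mult_right_mono) (use Suc.IH in \<open>simp_all add: s_def\<close>)
  also have "\<dots> = ennreal (exp (real (Suc n) * s))"
    by (simp add: ennreal_mult[symmetric] exp_add[symmetric] algebra_simps)
  finally show ?case by (simp add: s_def)
qed

lemma tail:
  assumes N: "N > 0" and m: "r * real N = real m"
    and h0: "\<forall>k. -int m \<le> k \<and> k \<le> 0 \<longrightarrow> h0 k \<in> grid_simplex N"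
    and l: "l > 0" and \<sigma>: "\<sigma> = 1 \<or> \<sigma> = -1" and nL: "n \<le> L"
  shows "measure_pmf.prob (path_pmf N p h0 L) {h. a \<le> \<sigma> * Mart N i n h}
           \<le> exp (real n * (l\<^sup>2 * (2 / real N)\<^sup>2 / 8) - l * a)"
proof -
  define A where "A = {h. a \<le> \<sigma> * Mart N i n h}"
  define s where "s = l\<^sup>2 * (2 / real N)\<^sup>2 / 8"
  have "emeasure (measure_pmf (path_pmf N p h0 L)) A = (\<integral>\<^sup>+h. indicator A h \<partial>path_pmf N p h0 L)"
    by simp
  also have "\<dots> \<le> (\<integral>\<^sup>+h. ennreal (exp (l * (\<sigma> * Mart N i n h - a))) \<partial>path_pmf N p h0 L)"
  proof (rule nn_integral_mono)
    fix h
    show "indicator A h \<le> ennreal (exp (l * (\<sigma> * Mart N i n h - a)))"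
    proof (cases "h \<in> A")
      case True
      then have "0 \<le> l * (\<sigma> * Mart N i n h - a)" using l by (simp add: A_def)
      then have "1 \<le> exp (l * (\<sigma> * Mart N i n h - a))" by simp
      then show ?thesis using True by simp
    qed simp
  qed
  also have "\<dots> = (\<integral>\<^sup>+h. ennreal (exp (l * (\<sigma> * Mart N i n h - a))) \<partial>path_pmf N p h0 n)"
    by (rule nn_integral_path_later[OF _ nL]) (simp add: Mart_upd_later[OF N])
  also have "\<dots> = (\<integral>\<^sup>+h. ennreal (exp (l * (\<sigma> * Mart N i n h))) * ennreal (exp (- l * a)) \<partial>path_pmf N p h0 n)"
    by (simp add: ennreal_mult[symmetric] exp_add[symmetric] algebra_simps)
  also have "\<dots> = (\<integral>\<^sup>+h. ennreal (exp (l * (\<sigma> * Mart N i n h))) \<partial>path_pmf N p h0 n) * ennreal (exp (- l * a))"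
    by (rule nn_integral_multc) simp
  also have "\<dots> \<le> ennreal (exp (real n * s)) * ennreal (exp (- l * a))"
    by (rule mult_right_mono) (use mgf[OF N m h0 l \<sigma>] in \<open>simp_all add: s_def\<close>)
  also have "\<dots> = ennreal (exp (real n * s - l * a))"
    by (simp add: ennreal_mult[symmetric] exp_add[symmetric])
  finally have "ennreal (measure_pmf.prob (path_pmf N p h0 L) A) \<le> ennreal (exp (real n * s - l * a))"
    by (simp add: measure_pmf.emeasure_eq_measure)
  then show ?thesis by (simp add: A_def s_def ennreal_le_iff)
qed

end



context mf begin

lemma x_simplex_all: "t \<ge> -r \<Longrightarrow> x t \<in> Dsimplex"
  using x_simplex x_init phi_simplex by (cases "t \<ge> 0") auto

lemma x_cont: assumes "0 \<le> T'" shows "continuous_on {-r..T'} x"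
proof -
  have c1: "continuous_on {-r..0} x"
    using phi_cont by (rule continuous_on_eq) (simp add: x_init)
  have c2: "continuous_on {0..T'} x"
  proof (rule continuous_on_eq_continuous_within[THEN iffD2], intro ballI)
    fix t :: real assume t: "t \<in> {0..T'}"
    have "continuous (at t within {0..}) x"
      using x_ode[of t] t by (auto intro: has_vector_derivative_continuous)
    then show "continuous (at t within {0..T'}) x"
      by (rule continuous_within_subset) auto
  qed
  have "{-r..T'} = {-r..0} \<union> {0..T'}" using assms r_pos by auto
  then show ?thesis using continuous_on_closed_Un[OF _ _ c1 c2] by simp
qed

lemma mvt_comp:
  assumes a: "0 \<le> a" and ab: "a \<le> b"
  shows "\<exists>s\<in>{a..b}. x b $ i - x a $ i = (b - a) * Fmf p (\<lambda>\<theta>. x (s + \<theta>)) $ i"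
proof -
  have "((\<lambda>u. x u $ i) has_derivative (\<lambda>h. (h *\<^sub>R Fmf p (\<lambda>\<theta>. x (s + \<theta>))) $ i)) (at s within {a..b})"
    if s: "a \<le> s" "s \<le> b" for s
  proof -
    have "(x has_derivative (\<lambda>h. h *\<^sub>R Fmf p (\<lambda>\<theta>. x (s + \<theta>)))) (at s within {0..})"
      using x_ode[of s] s a by (simp add: has_vector_derivative_def)
    then have "(x has_derivative (\<lambda>h. h *\<^sub>R Fmf p (\<lambda>\<theta>. x (s + \<theta>)))) (at s within {a..b})"
      by (rule has_derivative_subset) (use a in auto)
    then show ?thesis by (rule bounded_linear.has_derivative[OF bounded_linear_vec_nth])
  qed
  from mvt_very_simple[OF ab this] show ?thesis by auto
qed

lemma geom_sum: "(q - 1) * (\<Sum>k<n. q ^ k) = q ^ n - (1::real)"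
  by (induction n) (auto simp: algebra_simps)

lemma step_term:
  assumes N: "N > 0" and m: "r * real N = real m"
    and hsimp: "\<forall>j. -int m \<le> j \<and> j \<le> int L \<longrightarrow> h j \<in> Dsimplex"
    and LT: "real L \<le> (T + 1) * real N"
    and om: "\<forall>s t. s \<in> {-r..T+1} \<longrightarrow> t \<in> {-r..T+1} \<longrightarrow> \<bar>s - t\<bar> \<le> 2 / real N \<longrightarrow> maxnorm (x s - x t) \<le> \<omega>"
    and kL: "k < L"
    and IHk: "\<forall>j. -int m \<le> j \<and> j \<le> int k \<longrightarrow> maxnorm (h j - x (real_of_int j / real N)) \<le> A"
  shows "\<bar>(1 / real N) * Fmf p (steppath N h (real k / real N)) $ i
           - (x (real (Suc k) / real N) $ i - x (real k / real N) $ i)\<bar> \<le> (K / real N) * (A + \<omega>)"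
proof -
  have Npos: "real N > 0" using N by simp
  obtain s where s: "s \<in> {real k / real N..real (Suc k) / real N}"
    and sx: "x (real (Suc k) / real N) $ i - x (real k / real N) $ i
             = (real (Suc k) / real N - real k / real N) * Fmf p (\<lambda>\<theta>. x (s + \<theta>)) $ i"
    using mvt_comp[of "real k / real N" "real (Suc k) / real N" i] Npos
    by (auto simp: divide_right_mono)
  have d1: "real (Suc k) / real N - real k / real N = 1 / real N"
    by (simp add: diff_divide_distrib[symmetric])
  have Ns1: "real k \<le> real N * s" "real N * s \<le> real k + 1"
    using s Npos by (auto simp: field_simps)
  have LN: "real L / real N \<le> T + 1" using LT Npos by (simp add: field_simps)
  let ?S = "steppath N h (real k / real N)"
  let ?X = "\<lambda>\<theta>. x (s + \<theta>)"
  have s0: "0 \<le> s" using s Npos by (auto intro: order_trans[rotated])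
  have sT: "s \<le> T + 1"
  proof -
    have "real (Suc k) \<le> real L" using kL by simp
    then have "real (Suc k) / real N \<le> real L / real N" using Npos by (simp add: divide_right_mono)
    then show ?thesis using s LN by auto
  qed
  have sup: "(SUP \<theta>\<in>{-r..0}. maxnorm (?S \<theta> - ?X \<theta>)) \<le> A + \<omega>"
  proof (rule cSUP_least)
    show "{-r..0} \<noteq> {}" using r_pos by simp
  next
    fix \<theta> :: real assume th: "\<theta> \<in> {-r..0}"
    define f where "f = \<lfloor>real N * \<theta>\<rfloor>"
    define j where "j = int k + f"
    have f1: "real_of_int f \<le> real N * \<theta>" "real N * \<theta> < real_of_int f + 1"
      unfolding f_def by linarith+
    have fr: "-int m \<le> f" "f \<le> 0" using floor_range[OF N m th] by (simp_all add: f_def)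
    have Sj: "?S \<theta> = h j" by (simp add: steppath_idx[OF N] j_def f_def)
    have jr: "-int m \<le> j" "j \<le> int k" using fr by (simp_all add: j_def)
    have E: "maxnorm (h j - x (real_of_int j / real N)) \<le> A" using IHk jr by blast
    have jN1: "-r \<le> real_of_int j / real N"
    proof -
      have "- real m \<le> real_of_int j" using jr by linarith
      then have "- real m / real N \<le> real_of_int j / real N" using Npos divide_right_mono[of "- real m" "real_of_int j" "real N"] by simp
      moreover have "- real m / real N = -r" using m Npos by (simp add: field_simps)
      ultimately show ?thesis by simp
    qed
    have jN2: "real_of_int j / real N \<le> T + 1"
    proof -
      have "real_of_int j \<le> real L" using jr kL by linarith
      then have "real_of_int j / real N \<le> real L / real N" using Npos by (simp add: divide_right_mono)
      then show ?thesis using LN by simp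
    qed
    have st1: "-r \<le> s + \<theta>"
    proof -
      have "-r \<le> \<theta>" using th by simp
      then show ?thesis using s0 by simp
    qed
    have st2: "s + \<theta> \<le> T + 1" using th sT by simp
    have diff: "real_of_int j / real N - (s + \<theta>) = (real_of_int j - real N * s - real N * \<theta>) / real N"
      using Npos by (simp add: field_simps)
    have "\<bar>real_of_int j - real N * s - real N * \<theta>\<bar> \<le> 2"
      using f1 Ns1 by (simp add: j_def)
    then have "\<bar>real_of_int j / real N - (s + \<theta>)\<bar> \<le> 2 / real N"
      unfolding diff using Npos by (simp add: abs_divide divide_right_mono)
    then have W: "maxnorm (x (real_of_int j / real N) - x (s + \<theta>)) \<le> \<omega>"
      using om jN1 jN2 st1 st2 by auto
    have "maxnorm (h j - x (s + \<theta>)) \<le> maxnorm (h j - x (real_of_int j / real N)) + maxnorm (x (real_of_int j / real N) - x (s + \<theta>))"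
      using maxnorm_triangle[of "h j - x (real_of_int j / real N)" "x (real_of_int j / real N) - x (s + \<theta>)"] by simp
    then show "maxnorm (?S \<theta> - ?X \<theta>) \<le> A + \<omega>" using E W Sj by simp
  qed
  have Ssimp: "\<forall>\<theta>\<in>{-r..0}. ?S \<theta> \<in> Dsimplex"
  proof
    fix \<theta> :: real assume th: "\<theta> \<in> {-r..0}"
    have fr: "-int m \<le> \<lfloor>real N * \<theta>\<rfloor>" "\<lfloor>real N * \<theta>\<rfloor> \<le> 0" using floor_range[OF N m th] by simp_all
    then have "-int m \<le> int k + \<lfloor>real N * \<theta>\<rfloor>" "int k + \<lfloor>real N * \<theta>\<rfloor> \<le> int L" using kL by linarith+
    then show "?S \<theta> \<in> Dsimplex" using hsimp by (simp add: steppath_idx[OF N])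
  qed
  have Xsimp: "\<forall>\<theta>\<in>{-r..0}. ?X \<theta> \<in> Dsimplex"
    using s0 by (auto intro!: x_simplex_all)
  have lip: "maxnorm (Fmf p ?S - Fmf p ?X) \<le> K * (A + \<omega>)"
    using F_lip[OF Ssimp Xsimp] sup K_pos by (meson mult_left_mono less_imp_le order_trans)
  have "(1 / real N) * Fmf p ?S $ i - (x (real (Suc k) / real N) $ i - x (real k / real N) $ i)
      = (1 / real N) * (Fmf p ?S - Fmf p ?X) $ i"
  proof -
    have sx': "x (real (Suc k) / real N) $ i - x (real k / real N) $ i = (1 / real N) * Fmf p ?X $ i"
      using sx unfolding d1 .
    show ?thesis by (simp only: sx' vector_minus_component right_diff_distrib)
  qed
  also have "\<bar>\<dots>\<bar> \<le> (1 / real N) * (K * (A + \<omega>))"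
    using maxnorm_ge[of "Fmf p ?S - Fmf p ?X" i] lip Npos
    by (simp add: abs_mult divide_right_mono)
  finally show ?thesis by simp
qed

lemma det_bound:
  assumes N: "N > 0" and m: "r * real N = real m"
    and hist: "\<forall>k. -int m \<le> k \<and> k \<le> 0 \<longrightarrow> h k = \<phi> (real_of_int k / real N)"
    and hsimp: "\<forall>j. -int m \<le> j \<and> j \<le> int L \<longrightarrow> h j \<in> Dsimplex"
    and LT: "real L \<le> (T + 1) * real N" and T0: "0 \<le> T"
    and om: "\<forall>s t. s \<in> {-r..T+1} \<longrightarrow> t \<in> {-r..T+1} \<longrightarrow> \<bar>s - t\<bar> \<le> 2 / real N \<longrightarrow> maxnorm (x s - x t) \<le> \<omega>"
    and a0: "0 \<le> a" and om0: "0 \<le> \<omega>"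
    and Mb: "\<forall>n\<le>L. \<forall>i. \<bar>Mart N i n h\<bar> \<le> a"
  shows "n \<le> L \<Longrightarrow> \<forall>j. -int m \<le> j \<and> j \<le> int n \<longrightarrow>
           maxnorm (h j - x (real_of_int j / real N)) \<le> (a + (T + 1) * K * \<omega>) * (1 + K / real N) ^ n"
proof (induction n rule: less_induct)
  case (less n)
  define B where "B = a + (T + 1) * K * \<omega>"
  define q where "q = 1 + K / real N"
  have Npos: "real N > 0" using N by simp
  have B0: "0 \<le> B" unfolding B_def using a0 om0 T0 K_pos by simp
  have q1: "1 \<le> q" unfolding q_def using K_pos Npos by simp
  have x0: "x (real_of_int j / real N) = h j" if "-int m \<le> j" "j \<le> 0" for j
  proof -
    have "- real m \<le> real_of_int j" using that by linarith
    then have "- real m / real N \<le> real_of_int j / real N" using Npos divide_right_mono[of "- real m" "real_of_int j" "real N"] by simp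
    moreover have "- real m / real N = -r" using m Npos by (simp add: field_simps)
    moreover have "real_of_int j / real N \<le> 0" using that Npos by (simp add: divide_nonpos_pos)
    ultimately have "real_of_int j / real N \<in> {-r..0}" by simp
    then show ?thesis using x_init hist that by simp
  qed
  show ?case
  proof (cases n)
    case 0
    show ?thesis
    proof (intro allI impI)
      fix j assume j: "-int m \<le> j \<and> j \<le> int n"
      have "maxnorm (h j - x (real_of_int j / real N)) \<le> B"
        using x0[of j] j 0 B0 by (intro maxnorm_le) simp
      then show "maxnorm (h j - x (real_of_int j / real N)) \<le> (a + (T + 1) * K * \<omega>) * (1 + K / real N) ^ n"
        using 0 by (simp add: B_def)
    qed
  next
    case (Suc n0)
    have IH: "\<And>k. k < n \<Longrightarrow> \<forall>j. -int m \<le> j \<and> j \<le> int k \<longrightarrow> maxnorm (h j - x (real_of_int j / real N)) \<le> B * q ^ k"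
      using less by (simp add: B_def q_def)
    have new: "maxnorm (h (int n) - x (real n / real N)) \<le> B * q ^ n"
    proof (rule maxnorm_le)
      fix i
      define f where "f = (\<lambda>k. x (real k / real N) $ i)"
      define Tk where "Tk = (\<lambda>k. (1 / real N) * Fmf p (steppath N h (real k / real N)) $ i - (f (Suc k) - f k))"
      have tb: "\<bar>Tk k\<bar> \<le> (K / real N) * (B * q ^ k + \<omega>)" if k: "k < n" for k
        unfolding Tk_def f_def
        by (rule step_term[OF N m hsimp LT om]) (use k less.prems IH[OF k] in auto)
      have h0: "h 0 = x 0" using x0[of 0] by simp
      have "(\<Sum>k<n. Tk k) = (1 / real N) * (\<Sum>k<n. Fmf p (steppath N h (real k / real N)) $ i) - (f n - f 0)"
      proof -
        have tel: "(\<Sum>k<n. f (Suc k) - f k) = f n - f 0" by (rule sum_lessThan_telescope)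
        show ?thesis unfolding Tk_def by (subst sum_subtractf) (simp only: tel sum_distrib_left)
      qed
      then have eq: "(h (int n) - x (real n / real N)) $ i = Mart N i n h + (\<Sum>k<n. Tk k)"
        using h0 by (simp add: Mart_def f_def)
      have "\<bar>Mart N i n h + (\<Sum>k<n. Tk k)\<bar> \<le> a + (\<Sum>k<n. (K / real N) * (B * q ^ k + \<omega>))"
      proof -
        have "\<bar>Mart N i n h\<bar> \<le> a" using Mb less.prems by simp
        moreover have "\<bar>\<Sum>k<n. Tk k\<bar> \<le> (\<Sum>k<n. (K / real N) * (B * q ^ k + \<omega>))"
          using tb by (intro order_trans[OF sum_abs sum_mono]) auto
        ultimately show ?thesis by linarith
      qed
      also have "(\<Sum>k<n. (K / real N) * (B * q ^ k + \<omega>)) = B * ((q - 1) * (\<Sum>k<n. q ^ k)) + real n * K * \<omega> / real N"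
        by (simp add: sum.distrib sum_distrib_left q_def algebra_simps)
      also have "\<dots> = B * (q ^ n - 1) + real n * K * \<omega> / real N" by (simp add: geom_sum)
      also have "real n * K * \<omega> / real N \<le> (T + 1) * K * \<omega>"
      proof -
        have "real n \<le> real L" using less.prems by simp
        then have "real n / real N \<le> T + 1" using LT Npos by (simp add: field_simps)
        then have "real n / real N * (K * \<omega>) \<le> (T + 1) * (K * \<omega>)"
          using K_pos om0 by (intro mult_right_mono) auto
        then show ?thesis by (simp add: algebra_simps)
      qed
      finally show "\<bar>(h (int n) - x (real n / real N)) $ i\<bar> \<le> B * q ^ n"
        unfolding eq by (simp add: B_def algebra_simps)
    qed
    show ?thesis
    proof (intro allI impI)
      fix j assume j: "-int m \<le> j \<and> j \<le> int n"
      show "maxnorm (h j - x (real_of_int j / real N)) \<le> (a + (T + 1) * K * \<omega>) * (1 + K / real N) ^ n"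
      proof (cases "j = int n")
        case True
        then show ?thesis using new by (simp add: B_def q_def)
      next
        case False
        then have "j \<le> int n0" using j Suc by simp
        then have "maxnorm (h j - x (real_of_int j / real N)) \<le> B * q ^ n0" using IH[of n0] Suc j by simp
        also have "\<dots> \<le> B * q ^ n" using B0 q1 Suc by (intro mult_left_mono power_increasing) auto
        finally show ?thesis by (simp add: B_def q_def)
      qed
    qed
  qed
qed

lemma dev_bound:
  assumes N: "N > 0" and m: "r * real N = real m"
    and hist: "\<forall>k. -int m \<le> k \<and> k \<le> 0 \<longrightarrow> h k = \<phi> (real_of_int k / real N)"
    and hsimp: "\<forall>j. -int m \<le> j \<and> j \<le> int (nat \<lfloor>real N * T\<rfloor> + 1) \<longrightarrow> h j \<in> Dsimplex"
    and T0: "0 < T"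
    and om: "\<forall>s t. s \<in> {-r..T+1} \<longrightarrow> t \<in> {-r..T+1} \<longrightarrow> \<bar>s - t\<bar> \<le> 2 / real N \<longrightarrow> maxnorm (x s - x t) \<le> \<omega>"
    and a0: "0 \<le> a" and om0: "0 \<le> \<omega>"
    and Mb: "\<forall>n\<le>nat \<lfloor>real N * T\<rfloor> + 1. \<forall>i. \<bar>Mart N i n h\<bar> \<le> a"
  shows "Dev N h x T \<le> (a + (T + 1) * K * \<omega>) * exp (K * (T + 1)) + \<omega>"
proof -
  define L where "L = nat \<lfloor>real N * T\<rfloor> + 1"
  define B where "B = a + (T + 1) * K * \<omega>"
  define q where "q = 1 + K / real N"
  have Npos: "real N > 0" using N by simp
  have N1: "1 \<le> real N" using N by simp
  have B0: "0 \<le> B" unfolding B_def using a0 om0 T0 K_pos by simp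
  have NT0: "0 \<le> real N * T" using T0 by simp
  have LNT: "real L \<le> real N * T + 1" unfolding L_def using NT0 by linarith
  have LT: "real L \<le> (T + 1) * real N" using LNT N1 by (simp add: algebra_simps)
  have LN: "real L / real N \<le> T + 1" using LT Npos by (simp add: field_simps)
  have E: "\<forall>j. -int m \<le> j \<and> j \<le> int L \<longrightarrow> maxnorm (h j - x (real_of_int j / real N)) \<le> B * q ^ L"
    using det_bound[OF N m hist _ LT _ om a0 om0, of L] hsimp Mb T0 by (simp add: L_def B_def q_def)
  have qL: "q ^ L \<le> exp (K * (T + 1))"
  proof -
    have "q \<le> exp (K / real N)" unfolding q_def using exp_ge_add_one_self[of "K / real N"] by (simp add: add.commute)
    then have "q ^ L \<le> exp (K / real N) ^ L" using K_pos Npos by (intro power_mono) (auto simp: q_def)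
    also have "\<dots> = exp (K * (real L / real N))" by (simp add: exp_of_nat_mult[symmetric] algebra_simps)
    also have "\<dots> \<le> exp (K * (T + 1))" using mult_left_mono[OF LN, of K] K_pos by simp
    finally show ?thesis .
  qed
  have BqL: "B * q ^ L \<le> B * exp (K * (T + 1))" using qL B0 by (rule mult_left_mono)
  show ?thesis
    unfolding Dev_def
  proof (rule cSUP_least)
    show "{0..T} \<noteq> {}" using T0 by simp
  next
    fix t assume t: "t \<in> {0..T}"
    define k where "k = \<lfloor>real N * t\<rfloor>"
    define lam where "lam = real N * t - real_of_int k"
    have Nt0: "0 \<le> real N * t" using t by simp
    have k0: "0 \<le> k" unfolding k_def using Nt0 by simp
    have lam: "0 \<le> lam" "lam \<le> 1" unfolding lam_def k_def by linarith+
    have NtT: "real N * t \<le> real N * T" using t Npos by simp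
    have kL: "k + 1 \<le> int L" unfolding k_def L_def using NtT NT0 floor_mono[OF NtT] by linarith
    have ip: "interp N h t - x t = (1 - lam) *\<^sub>R (h k - x t) + lam *\<^sub>R (h (k + 1) - x t)"
      unfolding interp_def Let_def k_def[symmetric] lam_def[symmetric] by (simp add: algebra_simps)
    have near: "maxnorm (h j - x t) \<le> B * exp (K * (T + 1)) + \<omega>"
      if j: "0 \<le> j" "j \<le> int L" "\<bar>real_of_int j - real N * t\<bar> \<le> 1" for j
    proof -
      have j1: "0 \<le> real_of_int j / real N" using j Npos by simp
      have j2: "real_of_int j / real N \<le> T + 1"
      proof -
        have "real_of_int j \<le> real L" using j by linarith
        then have "real_of_int j / real N \<le> real L / real N" using Npos by (simp add: divide_right_mono)
        then show ?thesis using LN by simp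
      qed
      have "real_of_int j / real N - t = (real_of_int j - real N * t) / real N"
        using Npos by (simp add: field_simps)
      then have "\<bar>real_of_int j / real N - t\<bar> = \<bar>real_of_int j - real N * t\<bar> / real N"
        using Npos by (simp add: abs_divide)
      also have "\<dots> \<le> 1 / real N" using j Npos by (simp add: divide_right_mono)
      also have "\<dots> \<le> 2 / real N" using Npos by (simp add: divide_right_mono)
      finally have "maxnorm (x (real_of_int j / real N) - x t) \<le> \<omega>"
        using om j1 j2 t r_pos by auto
      moreover have "maxnorm (h j - x (real_of_int j / real N)) \<le> B * q ^ L"
        using E j by auto
      moreover have "maxnorm (h j - x t) \<le> maxnorm (h j - x (real_of_int j / real N)) + maxnorm (x (real_of_int j / real N) - x t)"
        using maxnorm_triangle[of "h j - x (real_of_int j / real N)" "x (real_of_int j / real N) - x t"] by simp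
      ultimately show ?thesis using BqL by linarith
    qed
    have n1: "maxnorm (h k - x t) \<le> B * exp (K * (T + 1)) + \<omega>"
      using near[of k] k0 kL lam unfolding lam_def by auto
    have n2: "maxnorm (h (k + 1) - x t) \<le> B * exp (K * (T + 1)) + \<omega>"
      using near[of "k + 1"] k0 kL lam unfolding lam_def by auto
    have "maxnorm (interp N h t - x t) \<le> maxnorm ((1 - lam) *\<^sub>R (h k - x t)) + maxnorm (lam *\<^sub>R (h (k + 1) - x t))"
      unfolding ip by (rule maxnorm_triangle)
    also have "\<dots> = (1 - lam) * maxnorm (h k - x t) + lam * maxnorm (h (k + 1) - x t)"
      using lam by (simp add: maxnorm_scale)
    also have "\<dots> \<le> (1 - lam) * (B * exp (K * (T + 1)) + \<omega>) + lam * (B * exp (K * (T + 1)) + \<omega>)"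
      using lam n1 n2 by (intro add_mono mult_left_mono) auto
    also have "\<dots> = B * exp (K * (T + 1)) + \<omega>" by (simp add: algebra_simps)
    finally show "maxnorm (interp N h t - x t) \<le> (a + (T + 1) * K * \<omega>) * exp (K * (T + 1)) + \<omega>"
      by (simp add: B_def)
  qed
qed

end



lemma arith_tail:
  fixes n L N a T :: real
  assumes L: "0 < L" and n: "0 \<le> n" "n \<le> L" and N: "0 < N" and a: "0 < a" and LT: "L \<le> 2 * N * T" and T: "0 < T"
  shows "n * (a * N\<^sup>2 / L)\<^sup>2 * (2 / N)\<^sup>2 / 8 - (a * N\<^sup>2 / L) * a \<le> - (a\<^sup>2 * N / (4 * T))"
proof -
  have e1: "n * (a * N\<^sup>2 / L)\<^sup>2 * (2 / N)\<^sup>2 / 8 = n * (a\<^sup>2 * N\<^sup>2 / (2 * L\<^sup>2))"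
    using L N by (simp add: field_simps power2_eq_square)
  have "n * (a\<^sup>2 * N\<^sup>2 / (2 * L\<^sup>2)) \<le> L * (a\<^sup>2 * N\<^sup>2 / (2 * L\<^sup>2))"
    using n by (intro mult_right_mono) auto
  also have "\<dots> = a\<^sup>2 * N\<^sup>2 / (2 * L)" using L by (simp add: field_simps power2_eq_square)
  finally have e2': "n * (a\<^sup>2 * N\<^sup>2 / (2 * L\<^sup>2)) \<le> a\<^sup>2 * N\<^sup>2 / (2 * L)" .
  have e2: "n * (a * N\<^sup>2 / L)\<^sup>2 * (2 / N)\<^sup>2 / 8 \<le> a\<^sup>2 * N\<^sup>2 / (2 * L)" unfolding e1 by (rule e2')
  have e3: "(a * N\<^sup>2 / L) * a = 2 * (a\<^sup>2 * N\<^sup>2 / (2 * L))" using L by (simp add: field_simps power2_eq_square)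
  have "a\<^sup>2 * N\<^sup>2 / (4 * N * T) \<le> a\<^sup>2 * N\<^sup>2 / (2 * L)"
    using L LT N T a by (intro divide_left_mono) (auto intro!: mult_pos_pos)
  moreover have "a\<^sup>2 * N\<^sup>2 / (4 * N * T) = a\<^sup>2 * N / (4 * T)" using N by (simp add: field_simps power2_eq_square)
  ultimately show ?thesis using e2 e3 by linarith
qed

lemma exp_quad: assumes "0 \<le> (y::real)" shows "1 + y + y\<^sup>2 / 4 \<le> exp y"
proof -
  have "1 + y + y\<^sup>2 / 4 = (1 + y / 2)\<^sup>2" by (simp add: power2_eq_square field_simps)
  also have "\<dots> \<le> (exp (y / 2))\<^sup>2"
    using assms exp_ge_add_one_self[of "y / 2"] by (intro power_mono) (auto simp: add.commute)
  also have "\<dots> = exp y" using exp_double[of "y / 2"] by simp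
  finally show ?thesis .
qed

context mf begin

lemma main:
  "\<forall>\<epsilon>>0. \<forall>T>0. \<exists>c>0. \<exists>N0. \<forall>N::nat. N \<ge> N0 \<longrightarrow>
           (\<forall>m::nat. m > 0 \<longrightarrow> r * real N = real m \<longrightarrow>
              (\<forall>k::int. -int m \<le> k \<and> k \<le> 0 \<longrightarrow> \<phi> (real_of_int k / real N) \<in> grid_simplex N) \<longrightarrow>
              (\<forall>k::int. -int m \<le> k \<and> k \<le> -1 \<longrightarrow>
                 maxnorm (\<phi> (real_of_int k / real N) - \<phi> (real_of_int (k + 1) / real N)) \<le> 2 / real N) \<longrightarrow>
              measure_pmf.prob
                (path_pmf N p (\<lambda>k. \<phi> (real_of_int k / real N)) (nat \<lfloor>real N * T\<rfloor> + 1))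
                {h. Dev N h x T \<ge> \<epsilon>}
              \<le> 2 * real CARD('d) * exp (- (\<epsilon>\<^sup>2) * c * real N))"
proof (intro allI impI)
  fix \<epsilon> T :: real assume eps: "\<epsilon> > 0" and T: "T > 0"
  define C where "C = exp (K * (T + 1))"
  define a where "a = \<epsilon> / (2 * C)"
  define \<omega> where "\<omega> = \<epsilon> / (4 * ((T + 1) * K * C + 1))"
  define c0 where "c0 = 1 / (16 * C\<^sup>2 * T)"
  define c where "c = c0 / 2"
  have C0: "C > 0" by (simp add: C_def)
  have a0: "a > 0" using eps C0 by (simp add: a_def)
  have KC0: "0 \<le> (T + 1) * K * C" using T K_pos C0 by simp
  have om0: "\<omega> > 0" using eps KC0 by (simp add: \<omega>_def)
  have c00: "c0 > 0" using C0 T by (simp add: c0_def)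
  have c0: "c > 0" using c00 by (simp add: c_def)
  have key: "(a + (T + 1) * K * \<omega>) * C + \<omega> < \<epsilon>"
  proof -
    have "(a + (T + 1) * K * \<omega>) * C + \<omega> = \<epsilon> / 2 + \<omega> * ((T + 1) * K * C + 1)"
      using C0 by (simp add: a_def algebra_simps)
    also have "\<omega> * ((T + 1) * K * C + 1) = \<epsilon> / 4"
    proof -
      have pos: "(T + 1) * K * C + 1 > 0" using KC0 by linarith
      then show ?thesis by (simp add: \<omega>_def field_simps)
    qed
    finally show ?thesis using eps by simp
  qed
  have uc: "uniformly_continuous_on {-r..T+1} x"
    by (rule compact_uniformly_continuous[OF x_cont]) (use T in auto)
  obtain \<eta> where eta: "\<eta> > 0" and etaP: "\<forall>s\<in>{-r..T+1}. \<forall>t\<in>{-r..T+1}. dist t s < \<eta> \<longrightarrow> dist (x t) (x s) < \<omega>"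
    using uc om0 unfolding uniformly_continuous_on_def by metis
  define \<beta> where "\<beta> = \<epsilon>\<^sup>2 * c"
  have beta0: "\<beta> > 0" using eps c0 by (simp add: \<beta>_def)
  define N0 where "N0 = nat \<lceil>2 / \<eta> + 1 / T + 4 * (T + 1) / \<beta>\<^sup>2\<rceil> + 1"
  show "\<exists>c>0. \<exists>N0. \<forall>N::nat. N \<ge> N0 \<longrightarrow>
           (\<forall>m::nat. m > 0 \<longrightarrow> r * real N = real m \<longrightarrow>
              (\<forall>k::int. -int m \<le> k \<and> k \<le> 0 \<longrightarrow> \<phi> (real_of_int k / real N) \<in> grid_simplex N) \<longrightarrow>
              (\<forall>k::int. -int m \<le> k \<and> k \<le> -1 \<longrightarrow>
                 maxnorm (\<phi> (real_of_int k / real N) - \<phi> (real_of_int (k + 1) / real N)) \<le> 2 / real N) \<longrightarrow>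
              measure_pmf.prob
                (path_pmf N p (\<lambda>k. \<phi> (real_of_int k / real N)) (nat \<lfloor>real N * T\<rfloor> + 1))
                {h. Dev N h x T \<ge> \<epsilon>}
              \<le> 2 * real CARD('d) * exp (- (\<epsilon>\<^sup>2) * c * real N))"
  proof (intro exI[of _ c] conjI c0 exI[of _ N0] allI impI)
    fix N m :: nat
    assume NN0: "N0 \<le> N" and m0: "0 < m" and m: "r * real N = real m"
      and grid: "\<forall>k::int. -int m \<le> k \<and> k \<le> 0 \<longrightarrow> \<phi> (real_of_int k / real N) \<in> grid_simplex N"
    define h0 where "h0 = (\<lambda>k::int. \<phi> (real_of_int k / real N))"
    define L where "L = nat \<lfloor>real N * T\<rfloor> + 1"
    define P where "P = path_pmf N p h0 L"
    have sumpos: "0 \<le> 2 / \<eta> + 1 / T + 4 * (T + 1) / \<beta>\<^sup>2" using eta T beta0 by simp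
    have NgeN0: "2 / \<eta> + 1 / T + 4 * (T + 1) / \<beta>\<^sup>2 < real N"
    proof -
      have "2 / \<eta> + 1 / T + 4 * (T + 1) / \<beta>\<^sup>2 \<le> real (nat \<lceil>2 / \<eta> + 1 / T + 4 * (T + 1) / \<beta>\<^sup>2\<rceil>)"
        using sumpos by linarith
      also have "\<dots> < real N0" by (simp add: N0_def)
      also have "\<dots> \<le> real N" using NN0 by simp
      finally show ?thesis .
    qed
    have N: "N > 0" using NN0 by (simp add: N0_def)
    have Npos: "real N > 0" using N by simp
    have N1: "1 \<le> real N" using N by simp
    have p1: "0 \<le> 1 / T" "0 \<le> 4 * (T + 1) / \<beta>\<^sup>2" "0 \<le> 2 / \<eta>" using T eta by simp_all
    have Neta: "2 / real N < \<eta>"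
    proof -
      have "2 / \<eta> < real N" using NgeN0 p1 by linarith
      then show ?thesis using eta Npos by (simp add: field_simps)
    qed
    have NT1: "1 \<le> real N * T"
    proof -
      have "1 / T < real N" using NgeN0 p1 by linarith
      then show ?thesis using T by (simp add: field_simps)
    qed
    have Nbeta: "4 * (T + 1) / \<beta>\<^sup>2 < real N" using NgeN0 p1 by linarith
    have h0g: "\<forall>k. -int m \<le> k \<and> k \<le> 0 \<longrightarrow> h0 k \<in> grid_simplex N" using grid by (simp add: h0_def)
    have NT0: "0 \<le> real N * T" using T by simp
    have LNT: "real L \<le> real N * T + 1" unfolding L_def using NT0 by linarith
    have L0: "0 < real L" by (simp add: L_def)
    have L2: "real L \<le> 2 * real N * T" using LNT NT1 by simp
    have om: "\<forall>s t. s \<in> {-r..T+1} \<longrightarrow> t \<in> {-r..T+1} \<longrightarrow> \<bar>s - t\<bar> \<le> 2 / real N \<longrightarrow> maxnorm (x s - x t) \<le> \<omega>"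
    proof (intro allI impI)
      fix s t assume s: "s \<in> {-r..T+1}" and t: "t \<in> {-r..T+1}" and st: "\<bar>s - t\<bar> \<le> 2 / real N"
      have "dist s t < \<eta>" using st Neta by (simp add: dist_real_def)
      then have "dist (x s) (x t) < \<omega>" using etaP s t by blast
      then show "maxnorm (x s - x t) \<le> \<omega>" using maxnorm_le_norm[of "x s - x t"] by (simp add: dist_norm)
    qed
    define I where "I = {..L} \<times> (UNIV :: 'd set) \<times> {1, -1 :: real}"
    define A where "A = (\<lambda>(n, i, \<sigma>). {h. a \<le> \<sigma> * Mart N i n h})"
    have sub: "{h. Dev N h x T \<ge> \<epsilon>} \<inter> set_pmf P \<subseteq> (\<Union>j\<in>I. A j)"
    proof
      fix h assume hh: "h \<in> {h. Dev N h x T \<ge> \<epsilon>} \<inter> set_pmf P"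
      then have hD: "\<epsilon> \<le> Dev N h x T" and hP: "h \<in> set_pmf P" by auto
      note S = path_support[OF N m h0g hP[unfolded P_def]]
      show "h \<in> (\<Union>j\<in>I. A j)"
      proof (rule ccontr)
        assume nh: "h \<notin> (\<Union>j\<in>I. A j)"
        have Mb: "\<forall>n\<le>nat \<lfloor>real N * T\<rfloor> + 1. \<forall>i. \<bar>Mart N i n h\<bar> \<le> a"
        proof (intro allI impI)
          fix n i assume n: "n \<le> nat \<lfloor>real N * T\<rfloor> + 1"
          have "(n, i, 1) \<in> I" "(n, i, -1) \<in> I" using n by (auto simp: I_def L_def)
          then have "h \<notin> A (n, i, 1)" "h \<notin> A (n, i, -1)" using nh by blast+
          then show "\<bar>Mart N i n h\<bar> \<le> a" by (auto simp: A_def)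
        qed
        have hist: "\<forall>k. -int m \<le> k \<and> k \<le> 0 \<longrightarrow> h k = \<phi> (real_of_int k / real N)"
          using S by (simp add: h0_def)
        have hsimp: "\<forall>j. -int m \<le> j \<and> j \<le> int (nat \<lfloor>real N * T\<rfloor> + 1) \<longrightarrow> h j \<in> Dsimplex"
          using S by (auto simp: L_def grid_simplex_simplex)
        have "Dev N h x T \<le> (a + (T + 1) * K * \<omega>) * exp (K * (T + 1)) + \<omega>"
          by (rule dev_bound[OF N m hist hsimp T om]) (use a0 om0 Mb in auto)
        then show False using key hD by (simp add: C_def)
      qed
    qed
    have bnd: "measure_pmf.prob P (A j) \<le> exp (- (\<epsilon>\<^sup>2 * c0 * real N))" if j: "j \<in> I" for j
    proof -
      obtain n i \<sigma> where jj: "j = (n, i, \<sigma>)" by (cases j) auto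
      have nL: "n \<le> L" and \<sigma>: "\<sigma> = 1 \<or> \<sigma> = -1" using j jj by (auto simp: I_def)
      define l where "l = a * (real N)\<^sup>2 / real L"
      have l0: "l > 0" using a0 Npos L0 by (simp add: l_def)
      have "measure_pmf.prob P (A j) \<le> exp (real n * (l\<^sup>2 * (2 / real N)\<^sup>2 / 8) - l * a)"
        unfolding P_def jj A_def using tail[OF N m h0g l0 \<sigma> nL, of a i] by simp
      also have "\<dots> \<le> exp (- (a\<^sup>2 * real N / (4 * T)))"
      proof -
        have "real n * (l\<^sup>2 * (2 / real N)\<^sup>2 / 8) - l * a = real n * l\<^sup>2 * (2 / real N)\<^sup>2 / 8 - l * a" by simp
        also have "\<dots> \<le> - (a\<^sup>2 * real N / (4 * T))"
          unfolding l_def by (rule arith_tail) (use L0 nL Npos a0 L2 T in auto)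
        finally show ?thesis by simp
      qed
      also have "a\<^sup>2 * real N / (4 * T) = \<epsilon>\<^sup>2 * c0 * real N"
        using C0 T by (simp add: a_def c0_def field_simps power2_eq_square)
      finally show ?thesis .
    qed
    have finI: "finite I" by (simp add: I_def)
    have cardI: "card I = (L + 1) * CARD('d) * 2" by (simp add: I_def card_cartesian_product)
    have "measure_pmf.prob P {h. Dev N h x T \<ge> \<epsilon>} = measure_pmf.prob P ({h. Dev N h x T \<ge> \<epsilon>} \<inter> set_pmf P)"
      by (simp add: measure_Int_set_pmf)
    also have "\<dots> \<le> measure_pmf.prob P (\<Union>j\<in>I. A j)"
      by (rule measure_pmf.finite_measure_mono[OF sub]) simp
    also have "\<dots> \<le> (\<Sum>j\<in>I. measure_pmf.prob P (A j))"
      by (rule measure_pmf.finite_measure_subadditive_finite[OF finI]) simp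
    also have "\<dots> \<le> (\<Sum>j\<in>I. exp (- (\<epsilon>\<^sup>2 * c0 * real N)))"
      by (rule sum_mono) (rule bnd)
    also have "\<dots> = real (L + 1) * real CARD('d) * 2 * exp (- (\<epsilon>\<^sup>2 * c0 * real N))"
      by (simp add: cardI algebra_simps)
    also have "\<dots> \<le> 2 * real CARD('d) * exp (- (\<epsilon>\<^sup>2) * c * real N)"
    proof -
      define y where "y = \<beta> * real N"
      have y0: "0 \<le> y" using beta0 Npos by (simp add: y_def)
      have "real N * (T + 1) \<le> y\<^sup>2 / 4"
      proof -
        have "4 * (T + 1) \<le> \<beta>\<^sup>2 * real N" using Nbeta beta0 by (simp add: field_simps)
        then have "4 * (T + 1) * real N \<le> \<beta>\<^sup>2 * real N * real N" using Npos by (intro mult_right_mono) auto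
        then show ?thesis by (simp add: y_def power2_eq_square algebra_simps)
      qed
      then have "real (L + 1) \<le> 1 + y + y\<^sup>2 / 4" using LNT y0 N1 by (simp add: algebra_simps)
      also have "\<dots> \<le> exp y" by (rule exp_quad[OF y0])
      finally have L1: "real (L + 1) \<le> exp y" .
      have ee: "exp (- (\<epsilon>\<^sup>2 * c0 * real N)) = exp (- y) * exp (- y)"
        by (simp add: y_def \<beta>_def c_def flip: exp_add)
      have "real (L + 1) * exp (- (\<epsilon>\<^sup>2 * c0 * real N)) \<le> exp y * exp (- y) * exp (- y)"
        unfolding ee using L1 by (simp add: mult.assoc mult_right_mono)
      also have "\<dots> = exp (- (\<epsilon>\<^sup>2) * c * real N)" by (simp add: y_def \<beta>_def flip: exp_add)
      finally have "real (L + 1) * exp (- (\<epsilon>\<^sup>2 * c0 * real N)) \<le> exp (- (\<epsilon>\<^sup>2) * c * real N)" .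
      then have fin: "2 * real CARD('d) * (real (L + 1) * exp (- (\<epsilon>\<^sup>2 * c0 * real N))) \<le> 2 * real CARD('d) * exp (- (\<epsilon>\<^sup>2) * c * real N)"
        by (intro mult_left_mono) auto
      have eq: "real (L + 1) * real CARD('d) * 2 * exp (- (\<epsilon>\<^sup>2 * c0 * real N)) = 2 * real CARD('d) * (real (L + 1) * exp (- (\<epsilon>\<^sup>2 * c0 * real N)))"
        by (simp only: mult_ac)
      show ?thesis unfolding eq by (rule fin)
    qed
    finally show "measure_pmf.prob (path_pmf N p (\<lambda>k. \<phi> (real_of_int k / real N)) (nat \<lfloor>real N * T\<rfloor> + 1))
                {h. Dev N h x T \<ge> \<epsilon>} \<le> 2 * real CARD('d) * exp (- (\<epsilon>\<^sup>2) * c * real N)"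
      by (simp add: P_def h0_def L_def)
  qed
qed

end


theorem theorem1:
  fixes p :: "'d::finite \<Rightarrow> 'd \<Rightarrow> (real \<Rightarrow> real^'d) \<Rightarrow> real"
    and r K :: real
    and \<phi> x :: "real \<Rightarrow> real^'d"
  assumes d2: "CARD('d) \<ge> 2"
    and r_pos: "r > 0"
    and p_local: "\<And>i j \<psi> \<eta>. (\<forall>\<theta>\<in>{-r..0}. \<psi> \<theta> = \<eta> \<theta>) \<Longrightarrow> p i j \<psi> = p i j \<eta>"
    and p_range: "\<And>i j \<psi>. i \<noteq> j \<Longrightarrow> (\<forall>\<theta>\<in>{-r..0}. \<psi> \<theta> \<in> Dsimplex) \<Longrightarrow>
                     0 \<le> p i j \<psi> \<and> p i j \<psi> \<le> 1"
    and p_sum: "\<And>\<psi>. (\<forall>\<theta>\<in>{-r..0}. \<psi> \<theta> \<in> Dsimplex) \<Longrightarrow>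
                     (\<Sum>ij\<in>{ij. fst ij \<noteq> snd ij}. p (fst ij) (snd ij) \<psi>) \<le> 1"
    and p_zero: "\<And>i j \<psi>. i \<noteq> j \<Longrightarrow> (\<forall>\<theta>\<in>{-r..0}. \<psi> \<theta> \<in> Dsimplex) \<Longrightarrow>
                     \<psi> 0 $ j = 0 \<Longrightarrow> p i j \<psi> = 0"
    and K_pos: "K > 0"
    and F_lip: "\<And>\<psi> \<eta>. (\<forall>\<theta>\<in>{-r..0}. \<psi> \<theta> \<in> Dsimplex) \<Longrightarrow> (\<forall>\<theta>\<in>{-r..0}. \<eta> \<theta> \<in> Dsimplex) \<Longrightarrow>
                     maxnorm (Fmf p \<psi> - Fmf p \<eta>) \<le> K * (SUP \<theta>\<in>{-r..0}. maxnorm (\<psi> \<theta> - \<eta> \<theta>))"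
    and phi_cont: "continuous_on {-r..0} \<phi>"
    and phi_simplex: "\<And>\<theta>. \<theta> \<in> {-r..0} \<Longrightarrow> \<phi> \<theta> \<in> Dsimplex"
    and x_init: "\<And>\<theta>. \<theta> \<in> {-r..0} \<Longrightarrow> x \<theta> = \<phi> \<theta>"
    and x_ode: "\<And>t. t \<ge> 0 \<Longrightarrow>
                  (x has_vector_derivative Fmf p (\<lambda>\<theta>. x (t + \<theta>))) (at t within {0..})"
    and x_simplex: "\<And>t. t \<ge> 0 \<Longrightarrow> x t \<in> Dsimplex"
  shows "\<forall>\<epsilon>>0. \<forall>T>0. \<exists>c>0. \<exists>N0. \<forall>N::nat. N \<ge> N0 \<longrightarrow>
           (\<forall>m::nat. m > 0 \<longrightarrow> r * real N = real m \<longrightarrow>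
              (\<forall>k::int. -int m \<le> k \<and> k \<le> 0 \<longrightarrow> \<phi> (real_of_int k / real N) \<in> grid_simplex N) \<longrightarrow>
              (\<forall>k::int. -int m \<le> k \<and> k \<le> -1 \<longrightarrow>
                 maxnorm (\<phi> (real_of_int k / real N) - \<phi> (real_of_int (k + 1) / real N)) \<le> 2 / real N) \<longrightarrow>
              measure_pmf.prob
                (path_pmf N p (\<lambda>k. \<phi> (real_of_int k / real N)) (nat \<lfloor>real N * T\<rfloor> + 1))
                {h. Dev N h x T \<ge> \<epsilon>}
              \<le> 2 * real CARD('d) * exp (- (\<epsilon>\<^sup>2) * c * real N))"
proof -
  interpret mf p r K \<phi> x
    by (rule mf.intro; fact)
  show ?thesis by (rule main)
qed

end
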